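(* Let $p$ be a prime. If $P$ is a non-cyclic finite $p$-group of exponent $p$, then there exists a finite solvable group $G$ whose Sylow $p$-subgroups are isomorphic to $P$ such that $G$ has a redundant Sylow $p$-subgroup.
   Context: For a finite group $G$ and a prime $p$, $G_p$ denotes the set of $p$-elements of $G$ and $\mathrm{Syl}_p(G)$ the set of Sylow $p$-subgroups of $G$. $G$ is said to have a redundant Sylow $p$-subgroup if $G_p$ is contained in the union of the members of some proper subset of $\mathrm{Syl}_p(G)$. *)

theory Defs
  imports "HOL-Algebra.Algebra"
begin

definition p_elements :: "('a, 'b) monoid_scheme \<Rightarrow> nat \<Rightarrow> 'a set" where
  "p_elements G p = {x \<in> carrier G. \<exists>n::nat. group.ord G x = p ^ n}"

definition Syl :: "nat \<Rightarrow> ('a, 'b) monoid_scheme \<Rightarrow> 'a set set" where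
  "Syl p G = {H. subgroup H G \<and> card H = p ^ multiplicity p (order G)}"

definition has_redundant_sylow :: "nat \<Rightarrow> ('a, 'b) monoid_scheme \<Rightarrow> bool" where
  "has_redundant_sylow p G \<longleftrightarrow>
     (\<exists>S. S \<subset> Syl p G \<and> p_elements G p \<subseteq> \<Union>S)"

end

theory Submission
  imports Defs "HOL-Computational_Algebra.Primes" "HOL-Library.Numeral_Type"
begin

section \<open>Transport of a group structure along an injection\<close>

definition transp :: "('b \<Rightarrow> 'c) \<Rightarrow> 'b monoid \<Rightarrow> 'c monoid" where
  "transp f H = \<lparr>carrier = f ` carrier H,
     monoid.mult = (\<lambda>x y. f (the_inv_into (carrier H) f x \<otimes>\<^bsub>H\<^esub> the_inv_into (carrier H) f y)),
     one = f \<one>\<^bsub>H\<^esub>\<rparr>"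

lemma transp_group:
  assumes "group H" "inj_on f (carrier H)"
  shows "group (transp f H)"
proof (rule groupI)
  fix x y
  assume "x \<in> carrier (transp f H)" and "y \<in> carrier (transp f H)"
  then show "x \<otimes>\<^bsub>transp f H\<^esub> y \<in> carrier (transp f H)"
    using assms the_inv_into_f_f by (fastforce simp: transp_def group.is_monoid monoid.m_closed)
next
  show "\<one>\<^bsub>transp f H\<^esub> \<in> carrier (transp f H)"
    unfolding transp_def by (simp add: assms group.is_monoid)
next
  fix x y z
  assume "x \<in> carrier (transp f H)" "y \<in> carrier (transp f H)" "z \<in> carrier (transp f H)"
  then show "x \<otimes>\<^bsub>transp f H\<^esub> y \<otimes>\<^bsub>transp f H\<^esub> z = x \<otimes>\<^bsub>transp f H\<^esub> (y \<otimes>\<^bsub>transp f H\<^esub> z)"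
    by (auto simp: assms transp_def group.is_monoid monoid.m_assoc monoid.m_closed the_inv_into_f_f)
next
  fix x
  assume x: "x \<in> carrier (transp f H)"
  then show "\<one>\<^bsub>transp f H\<^esub> \<otimes>\<^bsub>transp f H\<^esub> x = x"
    by (auto simp: assms group.is_monoid the_inv_into_f_f transp_def)
  have "\<exists>y\<in>carrier H. f (y \<otimes>\<^bsub>H\<^esub> z) = f \<one>\<^bsub>H\<^esub>" if "z \<in> carrier H" for z
    by (metis \<open>group H\<close> group.l_inv_ex that)
  with assms x show "\<exists>y\<in>carrier (transp f H). y \<otimes>\<^bsub>transp f H\<^esub> x = \<one>\<^bsub>transp f H\<^esub>"
    by (auto simp: transp_def the_inv_into_f_f)
qed

lemma transp_iso:
  assumes "group H" "inj_on f (carrier H)"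
  shows "f \<in> iso H (transp f H)"
proof -
  have "f \<in> hom H (transp f H)"
    using assms by (force simp add: hom_def transp_def the_inv_into_f_f)
  then show ?thesis using assms by (simp add: iso_def bij_betw_def transp_def)
qed

section \<open>Transfer of properties along isomorphisms\<close>

lemma iso_ord:
  assumes h: "h \<in> iso A B" and A: "group A" and B: "group B" and x: "x \<in> carrier A"
  shows "group.ord B (h x) = group.ord A x"
proof -
  interpret A: group A by fact
  interpret B: group B by fact
  interpret gh: group_hom A B h
    using h A B by (simp add: group_hom_def group_hom_axioms_def iso_def)
  have inj: "inj_on h (carrier A)" using h by (simp add: iso_def bij_betw_def)
  have "h x \<in> carrier B" using x by simp
  moreover have "\<forall>n::nat. (h x [^]\<^bsub>B\<^esub> n = \<one>\<^bsub>B\<^esub>) \<longleftrightarrow> A.ord x dvd n"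
  proof
    fix n :: nat
    have "h x [^]\<^bsub>B\<^esub> n = h (x [^]\<^bsub>A\<^esub> n)" using x by (simp add: gh.hom_nat_pow)
    moreover have "h (x [^]\<^bsub>A\<^esub> n) = \<one>\<^bsub>B\<^esub> \<longleftrightarrow> x [^]\<^bsub>A\<^esub> n = \<one>\<^bsub>A\<^esub>"
      using inj x gh.hom_one by (metis A.nat_pow_closed A.one_closed inj_on_eq_iff)
    ultimately show "(h x [^]\<^bsub>B\<^esub> n = \<one>\<^bsub>B\<^esub>) \<longleftrightarrow> A.ord x dvd n"
      using A.pow_eq_id[OF x] by simp
  qed
  ultimately show ?thesis using B.ord_unique by blast
qed

lemma iso_Syl:
  assumes h: "h \<in> iso A B" and A: "group A" and B: "group B" and Q: "Q \<in> Syl p A"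
  shows "h ` Q \<in> Syl p B"
proof -
  have sg: "subgroup Q A" and cQ: "card Q = p ^ multiplicity p (order A)"
    using Q by (auto simp: Syl_def)
  have "subgroup (h ` Q) B" using subgroup.iso_subgroup[OF sg A B h] .
  moreover have "inj_on h Q"
    using h subgroup.subset[OF sg] by (auto simp: iso_def bij_betw_def intro: inj_on_subset)
  then have "card (h ` Q) = card Q" by (rule card_image)
  moreover have "order A = order B"
    using iso_same_card[OF is_isoI[OF h]] by (simp add: order_def)
  ultimately show ?thesis using cQ by (simp add: Syl_def)
qed

lemma iso_Syl_rev:
  assumes h: "h \<in> iso A B" and A: "group A" and B: "group B" and Q: "Q \<in> Syl p B"
  shows "\<exists>Q'\<in>Syl p A. Q = h ` Q'"
proof -
  let ?h' = "inv_into (carrier A) h"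
  have h': "?h' \<in> iso B A" using group.iso_set_sym[OF A h] .
  have "?h' ` Q \<in> Syl p A" using iso_Syl[OF h' B A Q] .
  moreover have "Q \<subseteq> carrier B" using Q by (auto simp: Syl_def dest: subgroup.subset)
  then have "h ` ?h' ` Q = Q"
    using h by (auto simp: iso_def bij_betw_def image_image f_inv_into_f) (metis f_inv_into_f image_eqI subsetD)
  ultimately show ?thesis by metis
qed

lemma iso_transfer:
  assumes h: "h \<in> iso A B" and A: "group A" and B: "group B"
    and solA: "solvable A"
    and sylA: "\<forall>Q\<in>Syl p A. A\<lparr>carrier := Q\<rparr> \<cong> P"
    and redA: "has_redundant_sylow p A"
  shows "solvable B \<and> (\<forall>Q\<in>Syl p B. B\<lparr>carrier := Q\<rparr> \<cong> P) \<and> has_redundant_sylow p B"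
proof (intro conjI ballI)
  interpret gh: group_hom A B h
    using h A B by (simp add: group_hom_def group_hom_axioms_def iso_def)
  have inj: "inj_on h (carrier A)" and surj: "h ` carrier A = carrier B"
    using h by (auto simp: iso_def bij_betw_def)
  show "solvable B" using gh.surj_hom_imp_solvable[OF surj solA] .
  fix Q assume Q: "Q \<in> Syl p B"
  then obtain Q' where Q': "Q' \<in> Syl p A" and QQ: "Q = h ` Q'" using iso_Syl_rev[OF h A B] by blast
  have sg: "subgroup Q' A" using Q' by (simp add: Syl_def)
  have "restrict h Q' \<in> iso (A\<lparr>carrier := Q'\<rparr>) (B\<lparr>carrier := h ` Q'\<rparr>)"
    using iso_restrict[OF h A B sg] .
  then have "A\<lparr>carrier := Q'\<rparr> \<cong> B\<lparr>carrier := Q\<rparr>" using QQ by (auto intro: is_isoI)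
  then have "B\<lparr>carrier := Q\<rparr> \<cong> A\<lparr>carrier := Q'\<rparr>"
    using group.iso_sym[OF subgroup.subgroup_is_group[OF sg A]] by blast
  then show "B\<lparr>carrier := Q\<rparr> \<cong> P" using sylA Q' iso_trans by blast
next
  have inj: "inj_on h (carrier A)" and surj: "h ` carrier A = carrier B"
    using h by (auto simp: iso_def bij_betw_def)
  obtain S where S: "S \<subset> Syl p A" and cov: "p_elements A p \<subseteq> \<Union>S"
    using redA by (auto simp: has_redundant_sylow_def)
  obtain Q0 where Q0: "Q0 \<in> Syl p A" "Q0 \<notin> S" using S by blast
  let ?S = "(\<lambda>Q. h ` Q) ` S"
  have sub: "\<And>Q. Q \<in> Syl p A \<Longrightarrow> Q \<subseteq> carrier A" by (auto simp: Syl_def dest: subgroup.subset)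
  have "?S \<subseteq> Syl p B" using S iso_Syl[OF h A B] by blast
  moreover have "h ` Q0 \<in> Syl p B" using iso_Syl[OF h A B Q0(1)] .
  moreover have "h ` Q0 \<notin> ?S"
  proof
    assume "h ` Q0 \<in> ?S"
    then obtain Q1 where Q1: "Q1 \<in> S" "h ` Q0 = h ` Q1" by blast
    have "Q0 = Q1"
      using Q1 inj sub Q0 S by (metis inj_on_image_eq_iff psubsetE subsetD)
    then show False using Q0 Q1 by simp
  qed
  ultimately have "?S \<subset> Syl p B" by blast
  moreover have "p_elements B p \<subseteq> \<Union>?S"
  proof
    fix b assume b: "b \<in> p_elements B p"
    then obtain k where bB: "b \<in> carrier B" and ob: "group.ord B b = p ^ k"
      by (auto simp: p_elements_def)
    then obtain a where a: "a \<in> carrier A" "b = h a" using surj by blast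
    have "group.ord A a = p ^ k" using iso_ord[OF h A B a(1)] ob a by simp
    then have "a \<in> p_elements A p" using a by (auto simp: p_elements_def)
    then obtain Q where "Q \<in> S" "a \<in> Q" using cov by blast
    then show "b \<in> \<Union>?S" using a by blast
  qed
  ultimately show "has_redundant_sylow p B" unfolding has_redundant_sylow_def by blast
qed


section \<open>p-groups are solvable\<close>

definition zcent :: "('a, 'b) monoid_scheme \<Rightarrow> 'a set" where
  "zcent G = {z \<in> carrier G. \<forall>g\<in>carrier G. z \<otimes>\<^bsub>G\<^esub> g = g \<otimes>\<^bsub>G\<^esub> z}"

lemma (in group) zcent_subgroup: "subgroup (zcent G) G"
proof (rule subgroupI)
  show "zcent G \<subseteq> carrier G" by (auto simp: zcent_def)
  show "zcent G \<noteq> {}" using one_closed by (auto simp: zcent_def)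
  fix a b assume a: "a \<in> zcent G" and b: "b \<in> zcent G"
  have ac: "a \<in> carrier G" and acomm: "\<And>g. g \<in> carrier G \<Longrightarrow> a \<otimes> g = g \<otimes> a"
    using a by (auto simp: zcent_def)
  have bc: "b \<in> carrier G" and bcomm: "\<And>g. g \<in> carrier G \<Longrightarrow> b \<otimes> g = g \<otimes> b"
    using b by (auto simp: zcent_def)
  have "inv a \<otimes> g = g \<otimes> inv a" if g: "g \<in> carrier G" for g
  proof -
    have "inv a \<otimes> g = inv a \<otimes> (g \<otimes> a) \<otimes> inv a"
      using ac g by (simp add: m_assoc)
    also have "\<dots> = inv a \<otimes> (a \<otimes> g) \<otimes> inv a" using acomm[OF g] by simp
    also have "\<dots> = g \<otimes> inv a"
      using ac g by (simp add: m_assoc[symmetric])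
    finally show ?thesis .
  qed
  then show "inv a \<in> zcent G" using ac by (auto simp: zcent_def)
  have "a \<otimes> b \<otimes> g = g \<otimes> (a \<otimes> b)" if g: "g \<in> carrier G" for g
  proof -
    have "a \<otimes> b \<otimes> g = a \<otimes> (g \<otimes> b)" using ac bc g bcomm[OF g] by (simp add: m_assoc)
    also have "\<dots> = (a \<otimes> g) \<otimes> b" using ac bc g by (simp add: m_assoc)
    also have "\<dots> = g \<otimes> (a \<otimes> b)" using ac bc g acomm[OF g] by (simp add: m_assoc)
    finally show ?thesis .
  qed
  then show "a \<otimes> b \<in> zcent G" using ac bc by (auto simp: zcent_def)
qed

lemma (in group) zcent_normal: "zcent G \<lhd> G"
proof -
  have "x \<otimes> h \<otimes> inv x \<in> zcent G" if "x \<in> carrier G" "h \<in> zcent G" for x h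
  proof -
    have "h \<in> carrier G" "\<forall>g\<in>carrier G. h \<otimes> g = g \<otimes> h" using that by (auto simp: zcent_def)
    then have "x \<otimes> h \<otimes> inv x = h" using that(1) by (metis inv_closed m_assoc r_inv r_one)
    then show ?thesis using that by simp
  qed
  then show ?thesis using zcent_subgroup by (simp add: normal_inv_iff)
qed

lemma (in group) zcent_solvable: "solvable (G\<lparr>carrier := zcent G\<rparr>)"
proof -
  have grp: "group (G\<lparr>carrier := zcent G\<rparr>)"
    using subgroup.subgroup_is_group[OF zcent_subgroup is_group] .
  have cg: "comm_group (G\<lparr>carrier := zcent G\<rparr>)"
  proof (rule group.group_comm_groupI[OF grp])
    fix x y assume "x \<in> carrier (G\<lparr>carrier := zcent G\<rparr>)" "y \<in> carrier (G\<lparr>carrier := zcent G\<rparr>)"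
    then have "x \<in> zcent G" "y \<in> carrier G" by (auto simp: zcent_def)
    then show "x \<otimes>\<^bsub>G\<lparr>carrier := zcent G\<rparr>\<^esub> y = y \<otimes>\<^bsub>G\<lparr>carrier := zcent G\<rparr>\<^esub> x"
      unfolding zcent_def by simp
  qed
  have "derived (G\<lparr>carrier := zcent G\<rparr>) (carrier (G\<lparr>carrier := zcent G\<rparr>)) = {\<one>\<^bsub>G\<lparr>carrier := zcent G\<rparr>\<^esub>}"
    using comm_group.derived_eq_singleton[OF cg subset_refl] .
  then have "(derived (G\<lparr>carrier := zcent G\<rparr>) ^^ 1) (carrier (G\<lparr>carrier := zcent G\<rparr>)) = {\<one>\<^bsub>G\<lparr>carrier := zcent G\<rparr>\<^esub>}"
    by simp
  then show ?thesis using group.solvable_iff_trivial_derived_seq[OF grp] by blast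
qed

lemma (in group) zcent_card:
  assumes p: "Factorial_Ring.prime p" and fin: "finite (carrier G)" and ord: "order G = p ^ n" and n: "n > 0"
  shows "p dvd card (zcent G)"
proof -
  define \<phi> where "\<phi> = (\<lambda>g. (\<lambda>h \<in> carrier G. g \<otimes> h \<otimes> (inv g)))"
  interpret A: group_action G "carrier G" \<phi>
    unfolding \<phi>_def by (rule action_by_conjugation)
  define Orbs where "Orbs = orbits G (carrier G) \<phi>"
  have orbx: "orbit G \<phi> x = {g \<otimes> x \<otimes> inv g | g. g \<in> carrier G}" if "x \<in> carrier G" for x
    using that by (auto simp: orbit_def \<phi>_def)
  have orb_dvd: "card B dvd p ^ n" if "B \<in> Orbs" for B
  proof -
    from that obtain x where x: "x \<in> carrier G" "B = orbit G \<phi> x" unfolding Orbs_def orbits_def by auto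
    show ?thesis using A.orbit_stabilizer_theorem[OF x(1)] x(2) ord by (metis dvd_triv_left)
  qed
  have sing: "card B = 1 \<longleftrightarrow> (\<exists>z\<in>zcent G. B = {z})" if "B \<in> Orbs" for B
  proof
    from that obtain x where x: "x \<in> carrier G" "B = orbit G \<phi> x" unfolding Orbs_def orbits_def by auto
    have xB: "x \<in> B" using x orbx[OF x(1)] by (auto intro!: exI[of _ \<one>])
    assume "card B = 1"
    then obtain z where "B = {z}" by (auto simp: card_Suc_eq)
    then have Bx: "B = {x}" using xB by simp
    have "g \<otimes> x = x \<otimes> g" if "g \<in> carrier G" for g
    proof -
      have "g \<otimes> x \<otimes> inv g = x" using Bx x orbx[OF x(1)] that by blast
      then show ?thesis using that x(1) by (metis inv_closed m_assoc m_closed r_inv r_one l_inv)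
    qed
    then have "x \<in> zcent G" using x(1) by (auto simp: zcent_def)
    then show "\<exists>z\<in>zcent G. B = {z}" using Bx by blast
  next
    assume "\<exists>z\<in>zcent G. B = {z}"
    then show "card B = 1" by auto
  qed
  have finO: "finite Orbs"
  proof -
    have "Orbs \<subseteq> Pow (carrier G)" using A.orbits_coverture unfolding Orbs_def by blast
    then show ?thesis by (rule finite_subset) (simp add: fin)
  qed
  have "card (carrier G) = (\<Sum>B\<in>Orbs. card B)"
    using A.disjoint_sum[OF fin, of "\<lambda>_. 1::nat"] unfolding Orbs_def by simp
  also have "\<dots> = (\<Sum>B\<in>Orbs. (if card B = 1 then 1 else 0)) + (\<Sum>B\<in>Orbs. (if card B = 1 then 0 else card B))"
    unfolding sum.distrib[symmetric] by (intro sum.cong) auto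
  finally have eq: "card (carrier G) = (\<Sum>B\<in>Orbs. (if card B = 1 then 1 else 0)) + (\<Sum>B\<in>Orbs. (if card B = 1 then 0 else card B))" .
  have "p dvd (\<Sum>B\<in>Orbs. (if card B = 1 then 0 else card B))"
  proof (rule dvd_sum)
    fix B assume "B \<in> Orbs"
    then obtain i where "i \<le> n" "card B = p ^ i" using orb_dvd divides_primepow_nat[OF p] by blast
    then show "p dvd (if card B = 1 then 0 else card B)"
      by (cases i) auto
  qed
  moreover have "p dvd card (carrier G)" using ord n by (simp add: order_def)
  ultimately have "p dvd (\<Sum>B\<in>Orbs. (if card B = 1 then 1 else 0))"
    unfolding eq by (simp add: dvd_add_left_iff)
  moreover have "(\<Sum>B\<in>Orbs. (if card B = 1 then 1 else 0)) = card {B\<in>Orbs. card B = 1}"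
    using card_as_sums[OF refl finO] by simp
  moreover have "{B\<in>Orbs. card B = 1} = (\<lambda>z. {z}) ` zcent G"
  proof
    show "{B\<in>Orbs. card B = 1} \<subseteq> (\<lambda>z. {z}) ` zcent G" using sing by blast
    show "(\<lambda>z. {z}) ` zcent G \<subseteq> {B\<in>Orbs. card B = 1}"
    proof
      fix B assume "B \<in> (\<lambda>z. {z}) ` zcent G"
      then obtain z where z: "z \<in> zcent G" "B = {z}" by blast
      then have zc: "z \<in> carrier G" by (simp add: zcent_def)
      have "orbit G \<phi> z = {z}"
        using z zc by (auto simp: orbx zcent_def m_assoc intro!: exI[of _ \<one>])
          (metis m_assoc r_inv r_one inv_closed)
      then have "B \<in> Orbs" using z zc unfolding Orbs_def orbits_def by auto
      then show "B \<in> {B\<in>Orbs. card B = 1}" using z by simp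
    qed
  qed
  moreover have "card ((\<lambda>z. {z}) ` zcent G) = card (zcent G)"
    by (rule card_image) (auto simp: inj_on_def)
  ultimately show ?thesis by simp
qed

lemma pgroup_solvable:
  fixes G :: "'a monoid"
  assumes p: "Factorial_Ring.prime p" and G: "group G" and ord: "order G = p ^ n"
  shows "solvable G"
  using G ord
proof (induction n arbitrary: G rule: less_induct)
  case (less n G)
  interpret G: group G by fact
  have fin: "finite (carrier G)"
    using less.prems(2) p by (metis G.order_gt_0_iff_finite prime_gt_0_nat zero_less_power)
  show ?case
  proof (cases "n = 0")
    case True
    have "card (carrier G) = 1" using less.prems(2) True by (simp add: order_def)
    then obtain b where "carrier G = {b}" by (rule card_1_singletonE)
    then have "carrier G = {\<one>\<^bsub>G\<^esub>}" using G.one_closed by (metis singletonD)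
    then have "(derived G ^^ 0) (carrier G) = {\<one>\<^bsub>G\<^esub>}" by simp
    then show ?thesis using G.solvable_iff_trivial_derived_seq by blast
  next
    case False
    let ?Z = "zcent G"
    have nZ: "?Z \<lhd> G" by (rule G.zcent_normal)
    have sZ: "subgroup ?Z G" by (rule G.zcent_subgroup)
    have "card ?Z dvd p ^ n"
      using G.lagrange[OF sZ] less.prems(2) by (metis dvd_triv_right)
    then obtain j where j: "j \<le> n" "card ?Z = p ^ j" using divides_primepow_nat[OF p] by blast
    have "p dvd card ?Z" using G.zcent_card[OF p fin less.prems(2)] False by simp
    have "j > 0"
    proof (rule ccontr)
      assume "\<not> j > 0"
      then have "card ?Z = 1" using j by simp
      then have "p = 1" using \<open>p dvd card ?Z\<close> by simp
      then show False using p by simp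
    qed
    have pn: "p ^ n = p ^ (n - j) * p ^ j" using j(1) by (simp add: power_add[symmetric])
    have "card (rcosets\<^bsub>G\<^esub> ?Z) * p ^ j = p ^ n"
      using G.lagrange[OF sZ] less.prems(2) j by simp
    then have cr: "card (rcosets\<^bsub>G\<^esub> ?Z) = p ^ (n - j)"
      unfolding pn using p by (simp add: prime_gt_0_nat)
    interpret N: normal ?Z G by (rule nZ)
    let ?rep = "\<lambda>U. SOME g. g \<in> U"
    let ?F = "flatten (G Mod ?Z) ?rep"
    have grpF: "group ?F" by (rule N.flatten_set_group_mod)
    have isoF: "?rep \<in> iso (G Mod ?Z) ?F" by (rule N.flatten_set_group_mod_iso)
    have "order ?F = order (G Mod ?Z)"
      using iso_same_card[OF is_isoI[OF isoF]] by (simp add: order_def)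
    also have "\<dots> = p ^ (n - j)" using cr by (simp add: order_def FactGroup_def)
    finally have oF: "order ?F = p ^ (n - j)" .
    have "n - j < n" using \<open>j > 0\<close> j by simp
    then have "solvable ?F" using less.IH[OF _ grpF oF] by blast
    moreover have grpM: "group (G Mod ?Z)" by (rule N.factorgroup_is_group)
    have "inv_into (carrier (G Mod ?Z)) ?rep \<in> iso ?F (G Mod ?Z)"
      using group.iso_set_sym[OF grpM isoF] .
    then have "group_hom ?F (G Mod ?Z) (inv_into (carrier (G Mod ?Z)) ?rep)"
         "inv_into (carrier (G Mod ?Z)) ?rep ` carrier ?F = carrier (G Mod ?Z)"
      using grpF grpM unfolding group_hom_def group_hom_axioms_def iso_def bij_betw_def by blast+
    ultimately have solM: "solvable (G Mod ?Z)" using group_hom.surj_hom_imp_solvable by blast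
    have h1: "group_hom (G\<lparr>carrier := ?Z\<rparr>) G id"
      using subgroup.subgroup_is_group[OF sZ G.is_group] sZ
      by (auto simp: group_hom_def group_hom_axioms_def hom_def dest: subgroup.subset)
    have h2: "group_hom G (G Mod ?Z) (\<lambda>a. ?Z #>\<^bsub>G\<^esub> a)"
      using N.r_coset_hom_Mod grpM by (simp add: group_hom_def group_hom_axioms_def)
    have surj: "(\<lambda>a. ?Z #>\<^bsub>G\<^esub> a) ` carrier G = carrier (G Mod ?Z)"
      by (simp add: carrier_FactGroup)
    have ker: "kernel G (G Mod ?Z) (\<lambda>a. ?Z #>\<^bsub>G\<^esub> a) \<subseteq> id ` carrier (G\<lparr>carrier := ?Z\<rparr>)"
      using G.coset_join1[OF _ _ sZ] by (auto simp: kernel_def)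
    show ?thesis
      using solvable_condition[OF h1 h2 surj ker G.zcent_solvable solM] .
  qed
qed


section \<open>The wreath-type construction\<close>

definition act :: "('a, 'b) monoid_scheme \<Rightarrow> 'a \<Rightarrow> ('a \<Rightarrow> 'r::comm_ring_1) \<Rightarrow> 'a \<Rightarrow> 'r" where
  "act G x v = (\<lambda>g\<in>carrier G. v (inv\<^bsub>G\<^esub> x \<otimes>\<^bsub>G\<^esub> g))"

definition vadd :: "('a, 'b) monoid_scheme \<Rightarrow> ('a \<Rightarrow> 'r::comm_ring_1) \<Rightarrow> ('a \<Rightarrow> 'r) \<Rightarrow> 'a \<Rightarrow> 'r" where
  "vadd G v w = (\<lambda>g\<in>carrier G. v g + w g)"

definition Wg :: "('a, 'b) monoid_scheme \<Rightarrow> (('a \<Rightarrow> 'r::comm_ring_1) \<times> 'a) monoid" where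
  "Wg G = \<lparr>carrier = (carrier G \<rightarrow>\<^sub>E (UNIV::'r set)) \<times> carrier G,
     monoid.mult = (\<lambda>a b. (vadd G (fst a) (act G (snd a) (fst b)), snd a \<otimes>\<^bsub>G\<^esub> snd b)),
     one = ((\<lambda>g\<in>carrier G. 0), \<one>\<^bsub>G\<^esub>)\<rparr>"

lemma carrier_Wg: "carrier (Wg G) = (carrier G \<rightarrow>\<^sub>E UNIV) \<times> carrier G"
  by (simp add: Wg_def)

lemma mult_Wg: "(v, x) \<otimes>\<^bsub>Wg G\<^esub> (w, y) = (\<lambda>g\<in>carrier G. v g + w (inv\<^bsub>G\<^esub> x \<otimes>\<^bsub>G\<^esub> g), x \<otimes>\<^bsub>G\<^esub> y)"
  by (auto simp: Wg_def vadd_def act_def fun_eq_iff)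

lemma one_Wg: "\<one>\<^bsub>Wg G\<^esub> = ((\<lambda>g\<in>carrier G. 0), \<one>\<^bsub>G\<^esub>)"
  by (simp add: Wg_def)

lemma (in group) Wg_group: "group (Wg G :: (('a \<Rightarrow> 'r::comm_ring_1) \<times> 'a) monoid)"
proof (rule groupI)
  fix a b assume "a \<in> carrier (Wg G :: (('a \<Rightarrow> 'r) \<times> 'a) monoid)" "b \<in> carrier (Wg G :: (('a \<Rightarrow> 'r) \<times> 'a) monoid)"
  then show "a \<otimes>\<^bsub>Wg G\<^esub> b \<in> carrier (Wg G :: (('a \<Rightarrow> 'r) \<times> 'a) monoid)"
    by (cases a, cases b) (simp add: mult_Wg carrier_Wg)
next
  show "\<one>\<^bsub>Wg G\<^esub> \<in> carrier (Wg G :: (('a \<Rightarrow> 'r) \<times> 'a) monoid)"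
    by (simp add: one_Wg carrier_Wg)
next
  fix a b c assume a: "a \<in> carrier (Wg G :: (('a \<Rightarrow> 'r) \<times> 'a) monoid)"
    and b: "b \<in> carrier (Wg G :: (('a \<Rightarrow> 'r) \<times> 'a) monoid)"
    and c: "c \<in> carrier (Wg G :: (('a \<Rightarrow> 'r) \<times> 'a) monoid)"
  obtain v x where ax: "a = (v, x)" "x \<in> carrier G" using a by (cases a) (auto simp: carrier_Wg)
  obtain w y where bx: "b = (w, y)" "y \<in> carrier G" using b by (cases b) (auto simp: carrier_Wg)
  obtain u z where cx: "c = (u, z)" "z \<in> carrier G" using c by (cases c) (auto simp: carrier_Wg)
  show "a \<otimes>\<^bsub>Wg G\<^esub> b \<otimes>\<^bsub>Wg G\<^esub> c = a \<otimes>\<^bsub>Wg G\<^esub> (b \<otimes>\<^bsub>Wg G\<^esub> c)"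
    unfolding ax bx cx mult_Wg
    using ax(2) bx(2) cx(2) by (auto simp: fun_eq_iff m_assoc inv_mult_group add.assoc)
next
  fix a assume a: "a \<in> carrier (Wg G :: (('a \<Rightarrow> 'r) \<times> 'a) monoid)"
  obtain v x where ax: "a = (v, x)" "x \<in> carrier G" "v \<in> carrier G \<rightarrow>\<^sub>E UNIV"
    using a by (cases a) (auto simp: carrier_Wg)
  show "\<one>\<^bsub>Wg G\<^esub> \<otimes>\<^bsub>Wg G\<^esub> a = a"
    unfolding ax one_Wg mult_Wg using ax by (simp, intro PiE_ext[OF _ ax(3)]) auto
  let ?b = "((\<lambda>g\<in>carrier G. - v (x \<otimes> g)), inv x)"
  have "?b \<in> carrier (Wg G :: (('a \<Rightarrow> 'r) \<times> 'a) monoid)" using ax by (simp add: carrier_Wg)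
  moreover have "?b \<otimes>\<^bsub>Wg G\<^esub> a = \<one>\<^bsub>Wg G\<^esub>"
    unfolding ax one_Wg mult_Wg using ax by (auto simp: fun_eq_iff m_assoc[symmetric])
  ultimately show "\<exists>b\<in>carrier (Wg G :: (('a \<Rightarrow> 'r) \<times> 'a) monoid). b \<otimes>\<^bsub>Wg G\<^esub> a = \<one>\<^bsub>Wg G\<^esub>"
    by blast
qed

lemma (in group) Wg_pow:
  assumes "x \<in> carrier G"
  shows "(v, x) [^]\<^bsub>Wg G\<^esub> (k::nat) =
    ((\<lambda>g\<in>carrier G. (\<Sum>i<k. (v::'a \<Rightarrow> 'r::comm_ring_1) (inv (x [^] i) \<otimes> g))), x [^] k)"
proof (induction k)
  case 0
  then show ?case by (simp add: one_Wg fun_eq_iff)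
next
  case (Suc k)
  show ?case
    using assms by (simp add: Suc mult_Wg fun_eq_iff m_assoc)
qed

lemma (in group) Wg_pow_one:
  "(u, \<one>) [^]\<^bsub>Wg G\<^esub> (k::nat) = ((\<lambda>g\<in>carrier G. of_nat k * (u::'a \<Rightarrow> 'r::comm_ring_1) g), \<one>)"
  by (simp add: Wg_pow fun_eq_iff)

lemma comm_group_solvable: "comm_group H \<Longrightarrow> solvable H"
proof -
  assume cg: "comm_group H"
  then have grp: "group H" by (simp add: comm_group_def group_def comm_monoid_def)
  have "derived H (carrier H) = {\<one>\<^bsub>H\<^esub>}"
    using comm_group.derived_eq_singleton[OF cg subset_refl] .
  then have "(derived H ^^ 1) (carrier H) = {\<one>\<^bsub>H\<^esub>}" by simp
  then show ?thesis using group.solvable_iff_trivial_derived_seq[OF grp] by blast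
qed

lemma D_identity:
  fixes a :: "nat \<Rightarrow> 'r::comm_ring_1"
  shows "(\<Sum>i<n. of_nat i * a i) - (\<Sum>i<n. of_nat i * a (Suc i)) = (\<Sum>i<n. a (Suc i)) - of_nat n * a n"
  by (induction n) (simp_all add: algebra_simps)


locale wsetup = group G for G :: "'a monoid" (structure) +
  fixes p n :: nat and e :: "'r::{comm_ring_1,finite}"
  assumes p: "Factorial_Ring.prime p"
    and fin: "finite (carrier G)"
    and ordG: "order G = p ^ n"
    and ncyc: "\<not> cyclic_group G"
    and expo: "\<forall>x\<in>carrier G. x [^] p = \<one>"
    and e: "of_nat p * e = 1"
    and nz: "(0::'r) \<noteq> 1"
    and ndvd: "\<not> p dvd card (UNIV::'r set)"
begin

abbreviation W :: "(('a \<Rightarrow> 'r) \<times> 'a) monoid" where "W \<equiv> Wg G"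

lemma W_group: "group W" by (rule Wg_group)

definition Qs :: "('a \<Rightarrow> 'r) \<Rightarrow> (('a \<Rightarrow> 'r) \<times> 'a) set" where
  "Qs w = (\<lambda>y. ((\<lambda>g\<in>carrier G. w g - w (inv y \<otimes> g)), y)) ` carrier G"

lemma Qs_hom:
  "(\<lambda>y. ((\<lambda>g\<in>carrier G. w g - w (inv y \<otimes> g)), y)) \<in> hom G W"
proof -
  have "((\<lambda>g\<in>carrier G. w g - w (inv y \<otimes> g)), y) \<otimes>\<^bsub>W\<^esub> ((\<lambda>g\<in>carrier G. w g - w (inv z \<otimes> g)), z)
        = ((\<lambda>g\<in>carrier G. w g - w (inv (y \<otimes> z) \<otimes> g)), y \<otimes> z)"
    if "y \<in> carrier G" "z \<in> carrier G" for y z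
    using that by (auto simp: mult_Wg fun_eq_iff inv_mult_group m_assoc)
  then show ?thesis by (auto simp: hom_def carrier_Wg)
qed

lemma Qs_subgroup: "subgroup (Qs w) W"
proof -
  interpret gh: group_hom G W "\<lambda>y. ((\<lambda>g\<in>carrier G. w g - w (inv y \<otimes> g)), y)"
    using Qs_hom W_group by (simp add: group_hom_def group_hom_axioms_def is_group)
  show ?thesis unfolding Qs_def by (rule gh.img_is_subgroup)
qed

lemma Qs_card: "card (Qs w) = p ^ n"
proof -
  have "inj_on (\<lambda>y. ((\<lambda>g\<in>carrier G. w g - w (inv y \<otimes> g)), y)) (carrier G)"
    by (auto simp: inj_on_def)
  then show ?thesis using ordG unfolding Qs_def by (simp add: card_image order_def)
qed

lemma order_W: "order W = card (UNIV::'r set) ^ card (carrier G) * p ^ n"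
proof -
  have "card (carrier G \<rightarrow>\<^sub>E (UNIV::'r set)) = card (UNIV::'r set) ^ card (carrier G)"
    using fin by (simp add: card_PiE)
  then show ?thesis using ordG by (simp add: order_def carrier_Wg card_cartesian_product)
qed

lemma mult_W: "multiplicity p (order W) = n"
proof -
  have pe: "prime_elem p" using p by simp
  have "\<not> p dvd card (UNIV::'r set) ^ card (carrier G)"
    using ndvd p prime_dvd_power by blast
  then have m0: "multiplicity p (card (UNIV::'r set) ^ card (carrier G)) = 0"
    by (rule not_dvd_imp_multiplicity_0)
  have "multiplicity p (card (UNIV::'r set) ^ card (carrier G) * p ^ n)
        = multiplicity p (card (UNIV::'r set) ^ card (carrier G)) + multiplicity p (p ^ n)"
    using p by (intro prime_elem_multiplicity_mult_distrib) (auto simp: prime_gt_0_nat)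
  then show ?thesis using m0 pe order_W by simp
qed

lemma Syl_W: "Syl p W = {Q. subgroup Q W \<and> card Q = p ^ n}"
  by (simp add: Syl_def mult_W)

lemma Qs_Syl: "Qs w \<in> Syl p W"
  using Qs_subgroup Qs_card by (simp add: Syl_W)

lemma pn_cancel:
  fixes c :: 'r
  assumes "of_nat (p ^ k) * c = 0" shows "c = 0"
proof -
  have "(of_nat p * e) ^ k = (1::'r)" using e by simp
  then have "of_nat (p ^ k) * e ^ k = (1::'r)" by (simp add: power_mult_distrib)
  then have "c = e ^ k * (of_nat (p ^ k) * c)" by (simp add: algebra_simps)
  then show ?thesis using assms by simp
qed

lemma Sylow_iso:
  assumes Q: "Q \<in> Syl p W"
  shows "W\<lparr>carrier := Q\<rparr> \<cong> G"
proof -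
  interpret Wgr: group W by (rule W_group)
  have sg: "subgroup Q W" and cQ: "card Q = p ^ n" using Q by (auto simp: Syl_W)
  have grpQ: "group (W\<lparr>carrier := Q\<rparr>)" using subgroup.subgroup_is_group[OF sg W_group] .
  have QW: "Q \<subseteq> carrier W" using subgroup.subset[OF sg] .
  have sndhom: "snd \<in> hom W G"
    by (auto simp: hom_def carrier_Wg mult_Wg)
  interpret sh: group_hom W G snd
    using sndhom W_group by (simp add: group_hom_def group_hom_axioms_def is_group)
  have finQ: "finite Q" using cQ p by (metis card.infinite not_prime_0 power_not_zero)
  have inj: "inj_on snd Q"
  proof
    fix a b assume a: "a \<in> Q" and b: "b \<in> Q" and ab: "snd a = snd b"
    have aW: "a \<in> carrier W" and bW: "b \<in> carrier W" using a b QW by auto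
    let ?c = "a \<otimes>\<^bsub>W\<^esub> inv\<^bsub>W\<^esub> b"
    have cQ': "?c \<in> Q" using a b sg by (simp add: subgroup.m_closed subgroup.m_inv_closed)
    have "snd ?c = snd a \<otimes> inv (snd b)"
      using aW bW by (simp add: sh.hom_mult sh.hom_inv)
    then have sc: "snd ?c = \<one>" using ab bW sh.hom_closed by (simp add: carrier_Wg mem_Times_iff)
    obtain u where u: "?c = (u, \<one>)" using sc by (metis prod.collapse)
    have uP: "u \<in> carrier G \<rightarrow>\<^sub>E UNIV" using cQ' QW u by (auto simp: carrier_Wg)
    have "?c [^]\<^bsub>W\<lparr>carrier := Q\<rparr>\<^esub> order (W\<lparr>carrier := Q\<rparr>) = \<one>\<^bsub>W\<lparr>carrier := Q\<rparr>\<^esub>"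
      using group.pow_order_eq_1[OF grpQ] cQ' by simp
    then have "?c [^]\<^bsub>W\<^esub> (p ^ n) = \<one>\<^bsub>W\<^esub>"
      using cQ by (simp add: order_def Wgr.nat_pow_consistent[symmetric])
    then have "((\<lambda>g\<in>carrier G. of_nat (p ^ n) * u g), \<one>) = ((\<lambda>g\<in>carrier G. (0::'r)), \<one>)"
      unfolding u Wg_pow_one one_Wg .
    then have "\<forall>g\<in>carrier G. of_nat (p ^ n) * u g = 0" by (auto simp: fun_eq_iff split: if_splits)
    then have "\<forall>g\<in>carrier G. u g = 0" using pn_cancel by blast
    then have "u = (\<lambda>g\<in>carrier G. 0)" using uP by (intro PiE_ext[OF uP]) auto
    then have "?c = \<one>\<^bsub>W\<^esub>" using u by (simp add: one_Wg)
    then show "a = b" using aW bW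
      by (metis Wgr.inv_closed Wgr.inv_equality Wgr.inv_inv)
  qed
  have "snd ` Q \<subseteq> carrier G" using QW by (auto simp: carrier_Wg)
  moreover have "card (snd ` Q) = card (carrier G)"
    using card_image[OF inj] cQ ordG by (simp add: order_def)
  ultimately have surj: "snd ` Q = carrier G" using fin by (simp add: card_subset_eq)
  have "snd \<in> hom (W\<lparr>carrier := Q\<rparr>) G"
    using QW by (fastforce simp: hom_def carrier_Wg mult_Wg)
  then have "snd \<in> iso (W\<lparr>carrier := Q\<rparr>) G"
    using inj surj by (simp add: iso_def bij_betw_def)
  then show ?thesis by (rule is_isoI)
qed

end


context wsetup
begin

lemma Qs_zero_elem:
  assumes y: "y \<in> carrier G" and g: "g \<in> carrier G"
    and eq: "Qs w = Qs (\<lambda>g\<in>carrier G. 0)"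
  shows "w g - w (inv y \<otimes> g) = 0"
proof -
  have "((\<lambda>g\<in>carrier G. w g - w (inv y \<otimes> g)), y) \<in> Qs w" using y by (auto simp: Qs_def)
  then have "((\<lambda>g\<in>carrier G. w g - w (inv y \<otimes> g)), y) \<in> Qs (\<lambda>g\<in>carrier G. 0)" using eq by simp
  then obtain y' where y': "y' \<in> carrier G"
    and E: "(\<lambda>g\<in>carrier G. w g - w (inv y \<otimes> g)) =
            (\<lambda>g\<in>carrier G. (\<lambda>g\<in>carrier G. (0::'r)) g - (\<lambda>g\<in>carrier G. (0::'r)) (inv y' \<otimes> g))"
    unfolding Qs_def by auto
  have "(\<lambda>g\<in>carrier G. w g - w (inv y \<otimes> g)) g =
        (\<lambda>g\<in>carrier G. (\<lambda>g\<in>carrier G. (0::'r)) g - (\<lambda>g\<in>carrier G. (0::'r)) (inv y' \<otimes> g)) g"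
    using E by simp
  then show ?thesis using g y' by simp
qed

lemma pelem_in:
  assumes a: "a \<in> p_elements W p"
  shows "\<exists>w. a \<in> Qs w \<and> Qs w \<noteq> Qs (\<lambda>g\<in>carrier G. 0)"
proof -
  interpret Wgr: group W by (rule W_group)
  obtain k where aW: "a \<in> carrier W" and ord: "Wgr.ord a = p ^ k"
    using a by (auto simp: p_elements_def)
  obtain v x where ax: "a = (v, x)" and vP: "v \<in> carrier G \<rightarrow>\<^sub>E UNIV" and xG: "x \<in> carrier G"
    using aW by (cases a) (auto simp: carrier_Wg)
  have xp: "x [^] p = \<one>" using expo xG by blast
  have a1: "a [^]\<^bsub>W\<^esub> (p ^ k) = \<one>\<^bsub>W\<^esub>" using Wgr.pow_ord_eq_1[OF aW] ord by simp
  define Sp where "Sp = (\<lambda>g\<in>carrier G. \<Sum>i<p. v (inv (x [^] i) \<otimes> g))"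
  have ap: "a [^]\<^bsub>W\<^esub> p = (Sp, \<one>)"
    unfolding ax Sp_def using Wg_pow[OF xG, of v p] xp by simp
  have "(Sp, \<one>) [^]\<^bsub>W\<^esub> (p ^ k) = a [^]\<^bsub>W\<^esub> (p * p ^ k)"
    using Wgr.nat_pow_pow[OF aW] ap by metis
  also have "\<dots> = (a [^]\<^bsub>W\<^esub> (p ^ k)) [^]\<^bsub>W\<^esub> p"
    using Wgr.nat_pow_pow[OF aW] by (metis mult.commute)
  also have "\<dots> = \<one>\<^bsub>W\<^esub>" using a1 by simp
  finally have "((\<lambda>g\<in>carrier G. of_nat (p ^ k) * Sp g), \<one>) = ((\<lambda>g\<in>carrier G. (0::'r)), \<one>)"
    unfolding Wg_pow_one one_Wg .
  then have "\<forall>g\<in>carrier G. of_nat (p ^ k) * Sp g = 0" by (auto simp: fun_eq_iff split: if_splits)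
  then have S0: "\<And>g. g \<in> carrier G \<Longrightarrow> (\<Sum>i<p. v (inv (x [^] i) \<otimes> g)) = 0"
    using pn_cancel unfolding Sp_def by auto
  define w0 where "w0 = (\<lambda>g\<in>carrier G. - e * (\<Sum>i<p. of_nat i * v (inv (x [^] i) \<otimes> g)))"
  have key0: "w0 g - w0 (inv x \<otimes> g) = v g" if g: "g \<in> carrier G" for g
  proof -
    define A where "A = (\<lambda>i::nat. v (inv (x [^] i) \<otimes> g))"
    have shift: "inv (x [^] i) \<otimes> (inv x \<otimes> g) = inv (x [^] Suc i) \<otimes> g" for i
      using xG g unfolding nat_pow_Suc2[OF xG] by (simp add: inv_mult_group m_assoc)
    have "w0 (inv x \<otimes> g) = - e * (\<Sum>i<p. of_nat i * A (Suc i))"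
      using xG g by (simp add: w0_def A_def shift)
    moreover have "w0 g = - e * (\<Sum>i<p. of_nat i * A i)"
      using g by (simp add: w0_def A_def)
    moreover have Ap: "A p = A 0" using xp g by (simp add: A_def)
    have "(\<Sum>i<Suc p. A i) = A 0 + (\<Sum>i<p. A (Suc i))" by (rule sum.lessThan_Suc_shift)
    moreover have "(\<Sum>i<Suc p. A i) = (\<Sum>i<p. A i) + A p" by simp
    ultimately have shiftsum: "(\<Sum>i<p. A (Suc i)) = (\<Sum>i<p. A i)" using Ap by simp
    have "(\<Sum>i<p. A i) = 0" using S0[OF g] by (simp add: A_def)
    have "w0 g - w0 (inv x \<otimes> g) = - e * ((\<Sum>i<p. of_nat i * A i) - (\<Sum>i<p. of_nat i * A (Suc i)))"
      using \<open>w0 (inv x \<otimes> g) = _\<close> \<open>w0 g = _\<close> by (simp add: algebra_simps)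
    also have "\<dots> = - e * ((\<Sum>i<p. A (Suc i)) - of_nat p * A p)" by (simp add: D_identity)
    also have "\<dots> = (of_nat p * e) * A 0"
      using shiftsum \<open>(\<Sum>i<p. A i) = 0\<close> Ap by (simp add: algebra_simps)
    also have "\<dots> = v g" using e g by (simp add: A_def)
    finally show ?thesis .
  qed
  have inQ: "a \<in> Qs w" if wP: "\<And>g. g \<in> carrier G \<Longrightarrow> w g - w (inv x \<otimes> g) = v g" for w
  proof -
    have "(\<lambda>g\<in>carrier G. w g - w (inv x \<otimes> g)) = v"
      by (rule PiE_ext[OF _ vP]) (auto simp: wP)
    then show ?thesis unfolding ax Qs_def using xG by force
  qed
  define c where "c = (\<lambda>g\<in>carrier G. if (\<exists>i::nat. g = x [^] i) then (1::'r) else 0)"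
  have invx: "inv x = x [^] (p - 1)"
  proof (rule inv_equality)
    have "p \<ge> 1" using p prime_ge_1_nat by blast
    then have "x [^] (p - 1) \<otimes> x = x [^] p" using xG by (metis nat_pow_Suc Suc_diff_1 less_le_trans zero_less_one)
    then show "x [^] (p - 1) \<otimes> x = \<one>" using xp by simp
  qed (use xG in auto)
  have cinv: "c (inv x \<otimes> g) = c g" if g: "g \<in> carrier G" for g
  proof -
    have "(\<exists>i::nat. inv x \<otimes> g = x [^] i) \<longleftrightarrow> (\<exists>i::nat. g = x [^] i)"
    proof
      assume "\<exists>i::nat. inv x \<otimes> g = x [^] i"
      then obtain i :: nat where "inv x \<otimes> g = x [^] i" by blast
      then have "g = x \<otimes> x [^] i" using xG g by (metis inv_solve_left nat_pow_closed)
      then show "\<exists>i::nat. g = x [^] i" using xG by (metis nat_pow_Suc2)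
    next
      assume "\<exists>i::nat. g = x [^] i"
      then obtain i :: nat where "g = x [^] i" by blast
      then have "inv x \<otimes> g = x [^] (p - 1 + i)" using xG invx by (simp add: nat_pow_mult)
      then show "\<exists>i::nat. inv x \<otimes> g = x [^] i" by blast
    qed
    then show ?thesis using g xG by (simp add: c_def)
  qed
  define w1 where "w1 = (\<lambda>g\<in>carrier G. w0 g + c g)"
  have key1: "w1 g - w1 (inv x \<otimes> g) = v g" if g: "g \<in> carrier G" for g
  proof -
    have "w1 g - w1 (inv x \<otimes> g) = (w0 g - w0 (inv x \<otimes> g)) + (c g - c (inv x \<otimes> g))"
      using g xG by (simp add: w1_def algebra_simps)
    then show ?thesis using key0[OF g] cinv[OF g] by simp
  qed
  show ?thesis
  proof (cases "Qs w0 \<noteq> Qs (\<lambda>g\<in>carrier G. 0)")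
    case True
    then show ?thesis using inQ key0 by blast
  next
    case False
    show ?thesis
    proof (cases "Qs w1 \<noteq> Qs (\<lambda>g\<in>carrier G. 0)")
      case True
      then show ?thesis using inQ key1 by blast
    next
      case False2: False
      have cc: "c g - c (inv y \<otimes> g) = 0" if "y \<in> carrier G" "g \<in> carrier G" for y g
      proof -
        have "w0 g - w0 (inv y \<otimes> g) = 0" using Qs_zero_elem[OF that] False by simp
        moreover have "w1 g - w1 (inv y \<otimes> g) = 0" using Qs_zero_elem[OF that] False2 by simp
        ultimately show ?thesis using that by (simp add: w1_def algebra_simps)
      qed
      have c1: "c \<one> = 1" unfolding c_def by (auto intro: exI[of _ 0])
      have allpow: "\<exists>i::nat. h = x [^] i" if h: "h \<in> carrier G" for h
      proof -
        have "c \<one> - c (inv (inv h) \<otimes> \<one>) = 0" using cc[of "inv h" \<one>] h by simp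
        then have "c h = 1" using c1 h by simp
        then show ?thesis using h nz unfolding c_def by (auto split: if_splits)
      qed
      have "carrier G = range (\<lambda>n::int. x [^] n)"
      proof
        show "carrier G \<subseteq> range (\<lambda>n::int. x [^] n)"
        proof
          fix h assume "h \<in> carrier G"
          then obtain i :: nat where "h = x [^] i" using allpow by blast
          then have "h = x [^] (int i)" by (simp add: int_pow_int)
          then show "h \<in> range (\<lambda>n::int. x [^] n)" by blast
        qed
        show "range (\<lambda>n::int. x [^] n) \<subseteq> carrier G" using xG by auto
      qed
      then have "cyclic_group G" using xG cyclic_group by blast
      then show ?thesis using ncyc by blast
    qed
  qed
qed

lemma W_solvable: "solvable W"
proof -
  interpret Wgr: group W by (rule W_group)
  have sndhom: "snd \<in> hom W G"
    by (auto simp: hom_def carrier_Wg mult_Wg)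
  interpret sh: group_hom W G snd
    using sndhom W_group by (simp add: group_hom_def group_hom_axioms_def is_group)
  let ?N = "kernel W G snd"
  have sN: "subgroup ?N W" by (rule sh.subgroup_kernel)
  have grpN: "group (W\<lparr>carrier := ?N\<rparr>)" using subgroup.subgroup_is_group[OF sN W_group] .
  have cg: "comm_group (W\<lparr>carrier := ?N\<rparr>)"
  proof (rule group.group_comm_groupI[OF grpN])
    fix a b assume a: "a \<in> carrier (W\<lparr>carrier := ?N\<rparr>)" and b: "b \<in> carrier (W\<lparr>carrier := ?N\<rparr>)"
    obtain v where av: "a = (v, \<one>)" using a by (cases a) (auto simp: kernel_def)
    obtain w where bw: "b = (w, \<one>)" using b by (cases b) (auto simp: kernel_def)
    show "a \<otimes>\<^bsub>W\<lparr>carrier := ?N\<rparr>\<^esub> b = b \<otimes>\<^bsub>W\<lparr>carrier := ?N\<rparr>\<^esub> a"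
      unfolding av bw by (auto simp: mult_Wg fun_eq_iff add.commute)
  qed
  have h1: "group_hom (W\<lparr>carrier := ?N\<rparr>) W id"
    using grpN W_group sN
    by (auto simp: group_hom_def group_hom_axioms_def hom_def kernel_def)
  have surj: "snd ` carrier W = carrier G"
  proof
    show "snd ` carrier W \<subseteq> carrier G" by (auto simp: carrier_Wg)
    show "carrier G \<subseteq> snd ` carrier W"
    proof
      fix y assume "y \<in> carrier G"
      then have "((\<lambda>g\<in>carrier G. (0::'r)), y) \<in> carrier W" by (simp add: carrier_Wg)
      then show "y \<in> snd ` carrier W" by force
    qed
  qed
  have ker: "kernel W G snd \<subseteq> id ` carrier (W\<lparr>carrier := ?N\<rparr>)" by simp
  have solG: "solvable G" using pgroup_solvable[OF p is_group ordG] .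
  have gh2: "group_hom W G snd" by (rule sh.group_hom_axioms)
  show ?thesis
    using solvable_condition[OF h1 gh2 surj ker comm_group_solvable[OF cg] solG] .
qed

lemma W_main: "solvable W \<and> (\<forall>Q\<in>Syl p W. W\<lparr>carrier := Q\<rparr> \<cong> G) \<and> has_redundant_sylow p W"
proof (intro conjI ballI)
  show "solvable W" by (rule W_solvable)
  show "W\<lparr>carrier := Q\<rparr> \<cong> G" if "Q \<in> Syl p W" for Q using Sylow_iso[OF that] .
  let ?P0 = "Qs (\<lambda>g\<in>carrier G. (0::'r))"
  let ?S = "Syl p W - {?P0}"
  have "?S \<subset> Syl p W" using Qs_Syl[of "\<lambda>g\<in>carrier G. (0::'r)"] by blast
  moreover have "p_elements W p \<subseteq> \<Union>?S"
  proof
    fix a assume "a \<in> p_elements W p"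
    then obtain w where "a \<in> Qs w" "Qs w \<noteq> ?P0" using pelem_in by blast
    then show "a \<in> \<Union>?S" using Qs_Syl[of w] by blast
  qed
  ultimately show "has_redundant_sylow p W" unfolding has_redundant_sylow_def by blast
qed

lemma W_finite: "finite (carrier W)"
  using fin by (simp add: carrier_Wg finite_PiE)

end

lemma main_generic:
  fixes G :: "'a monoid" and e :: "'r::{comm_ring_1,finite}"
  assumes p: "Factorial_Ring.prime p"
    and grp: "group G" and fin: "finite (carrier G)"
    and ordG: "order G = p ^ n"
    and ncyc: "\<not> cyclic_group G"
    and expo: "\<forall>x\<in>carrier G. x [^]\<^bsub>G\<^esub> p = \<one>\<^bsub>G\<^esub>"
    and e: "of_nat p * e = 1"
    and nz: "(0::'r) \<noteq> 1"
    and ndvd: "\<not> p dvd card (UNIV::'r set)"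
  shows "\<exists>H :: nat monoid. group H \<and> finite (carrier H) \<and> solvable H
           \<and> (\<forall>Q \<in> Syl p H. H\<lparr>carrier := Q\<rparr> \<cong> G)
           \<and> has_redundant_sylow p H"
proof -
  interpret ws: wsetup G p n e
    using assms by (simp add: wsetup_def wsetup_axioms_def)
  have finW: "finite (carrier ws.W)" by (rule ws.W_finite)
  obtain f :: "('a \<Rightarrow> 'r) \<times> 'a \<Rightarrow> nat" where inj: "inj_on f (carrier ws.W)"
    using finite_imp_inj_to_nat_seg[OF finW] by blast
  let ?H = "transp f ws.W"
  have gH: "group ?H" using transp_group[OF ws.W_group inj] .
  have iso: "f \<in> iso ws.W ?H" using transp_iso[OF ws.W_group inj] .
  have fH: "finite (carrier ?H)" using finW by (simp add: transp_def)
  have "solvable ?H \<and> (\<forall>Q\<in>Syl p ?H. ?H\<lparr>carrier := Q\<rparr> \<cong> G) \<and> has_redundant_sylow p ?H"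
    using ws.W_main iso_transfer[OF iso ws.W_group gH] by blast
  then show ?thesis using gH fH by blast
qed


lemma odd_of_nat_2: "odd (p::nat) \<Longrightarrow> (of_nat p :: 2) = 1"
proof -
  assume "odd p"
  then obtain k where "p = 2 * k + 1" by (metis oddE)
  moreover have t: "(2::2) = 0" by simp
  then have "(2::2) * of_nat k = 0" by (metis mult_zero_left)
  ultimately show ?thesis by simp
qed

theorem theoremA:
  fixes p :: nat and P :: "'a monoid"
  assumes "Factorial_Ring.prime p"
    and "group P" and "finite (carrier P)"
    and "\<exists>n::nat. order P = p ^ n"
    and "\<not> cyclic_group P"
    and "\<forall>x \<in> carrier P. x [^]\<^bsub>P\<^esub> p = \<one>\<^bsub>P\<^esub>"
  shows "\<exists>G :: nat monoid. group G \<and> finite (carrier G) \<and> solvable G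
           \<and> (\<forall>Q \<in> Syl p G. G\<lparr>carrier := Q\<rparr> \<cong> P)
           \<and> has_redundant_sylow p G"
proof -
  obtain n where n: "order P = p ^ n" using assms(4) by blast
  show ?thesis
  proof (cases "p = 2")
    case True
    have e: "of_nat p * (of_nat 2 :: 3) = 1" using True by simp
    have nz: "(0::3) \<noteq> 1" by simp
    have nd: "\<not> p dvd card (UNIV::3 set)" using True by simp
    show ?thesis using main_generic[OF assms(1-3) n assms(5-6) e nz nd] .
  next
    case False
    have p2: "p > 2" using prime_ge_2_nat[OF assms(1)] False by simp
    then have "odd p" by (rule prime_odd_nat[OF assms(1)])
    then have e: "of_nat p * (1 :: 2) = 1" using odd_of_nat_2 by simp
    have nz: "(0::2) \<noteq> 1" by simp
    have nd: "\<not> p dvd card (UNIV::2 set)"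
    proof
      assume "p dvd card (UNIV::2 set)"
      then have "p dvd 2" by simp
      then have "p \<le> 2" by (simp add: dvd_imp_le)
      then show False using p2 by simp
    qed
    show ?thesis using main_generic[OF assms(1-3) n assms(5-6) e nz nd] .
  qed
qed

end
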